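(* Let $0<q<1$ and $n\ge1$. For every $\lambda\in U(1)$ the formulas \begin{align*} \pi_\lambda(y_i)|\mathbf{k}\rangle &=q^{k_1+\ldots+k_{i-1}}\sqrt{1-q^{2k_i}}\,|\mathbf{k}-\mathbf{e}_i\rangle \qquad (1\leq i\leq n-1),\\ \pi_\lambda(y_n)|\mathbf{k}\rangle &=q^{k_1+\ldots+k_{n-1}}\sqrt{1-q^{4k_n}}\,|\mathbf{k}-\mathbf{e}_n\rangle ,\\ \pi_\lambda(y_{n+1})|\mathbf{k}\rangle &=\lambda\, q^{|\mathbf{k}|+k_n}|\mathbf{k}\rangle , \end{align*} define an irreducible bounded $*$-representation $\pi_\lambda$ of $\mathcal{A}(\Sigma^{2n+1}_q)$ on $\ell^2(\mathbb{N}^n)$. Here $\mathbf{k}=(k_1,\ldots,k_n)\in\mathbb{N}^n$ ($\mathbb{N}=\{0,1,2,\dots\}$), $|\mathbf{k}|=k_1+\dots+k_n$, $\{|\mathbf{k}\rangle\}$ is the canonical orthonormal basis of $\ell^2(\mathbb{N}^n)$, $\mathbf{e}_i$ is the $i$-th standard basis vector of $\mathbb{Z}^n$, and $|\mathbf{k}\rangle:=0$ if some component of $\mathbf{k}$ is negative.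
   Context: Let $0<q<1$, $n\ge1$. $\mathcal{A}(S^{4n-1}_q)$ is the complex unital $*$-algebra generated by $x_1,\dots,x_n,y_1,\dots,y_n$ and their adjoints subject to: $x_ix_j=q^{-1}x_jx_i$ ($i<j$); $y_iy_j=q^{-1}y_jy_i$ ($i>j$); $x_iy_j=q^{-1}y_jx_i$ ($i\ne j$); $y_ix_i=q^2x_iy_i+(q^2-1)\sum_{k=1}^{i-1}q^{i-k}x_ky_k$; $x_ix_i^*=x_i^*x_i+(1-q^2)\sum_{k=1}^{i-1}x_k^*x_k$; $y_iy_i^*=y_i^*y_i+(1-q^2)\{q^{2(n+1-i)}x_i^*x_i+\sum_{k=1}^n x_k^*x_k+\sum_{k=i+1}^n y_k^*y_k\}$; $x_iy_i^*=q^2y_i^*x_i$; $x_ix_j^*=qx_j^*x_i$ ($i\ne j$); $y_iy_j^*=qy_j^*y_i-(q^2-1)q^{2n+2-i-j}x_i^*x_j$ ($i\neq j$); $x_iy_j^*=qy_j^*x_i$ ($i<j$); $x_iy_j^*=qy_j^*x_i+(q^2-1)q^{i-j}y_i^*x_j$ ($i>j$); and $\sum_{i=1}^n(x_i^*x_i+y_i^*y_i)=1$. $\mathcal{A}(\Sigma^{2n+1}_q)$ is the quotient of $\mathcal{A}(S^{4n-1}_q)$ by the two-sided $*$-ideal generated by $x_1,\dots,x_{n-1}$; in it, $y_1,\dots,y_n$ denote the images of $y_1,\dots,y_n$ and $y_{n+1}$ denotes the image of $x_n$. In this quotient, $y_{n+1}$ is normal and the following hold (with their adjoints): $y_iy_j=q^{-1}y_jy_i$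 and $y_i^*y_j=q^{-1}y_jy_i^*$ for $i>j$, $(i,j)\neq(n+1,n)$; $y_{n+1}y_n=q^{-2}y_ny_{n+1}$, $y_{n+1}^*y_n=q^{-2}y_ny_{n+1}^*$; $[y_i,y_i^*]=(1-q^2)\sum_{k=i+1}^{n+1}y_k^*y_k$ for $i\neq n$; $[y_n,y_n^*]=(1-q^4)y_{n+1}^*y_{n+1}$; $\sum_{i=1}^{n+1}y_i^*y_i=1$. *)

theory Defs
  imports "HOL-Analysis.Analysis"
begin

text \<open>Multi-indices k = (k_1,...,k_n) are modelled as
  functions nat => nat vanishing outside {1..n}; vectors are functions from
  multi-indices to complex numbers that vanish outside the index set and are
  square summable.  Operators are functions on vectors; only their behaviour on
  l2 vectors matters.\<close>

type_synonym mindex = "nat \<Rightarrow> nat"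
type_synonym vec = "mindex \<Rightarrow> complex"
type_synonym op = "vec \<Rightarrow> vec"

definition idx :: "nat \<Rightarrow> mindex set" where
  "idx n = {k. \<forall>j. j \<notin> {1..n} \<longrightarrow> k j = 0}"

definition l2 :: "nat \<Rightarrow> vec set" where
  "l2 n = {f. (\<forall>k. k \<notin> idx n \<longrightarrow> f k = 0) \<and> (\<lambda>k. (cmod (f k))\<^sup>2) summable_on idx n}"

definition l2_inner :: "nat \<Rightarrow> vec \<Rightarrow> vec \<Rightarrow> complex" where
  "l2_inner n f g = infsum (\<lambda>k. cnj (f k) * g k) (idx n)"

definition l2_norm :: "nat \<Rightarrow> vec \<Rightarrow> real" where
  "l2_norm n f = sqrt (infsum (\<lambda>k. (cmod (f k))\<^sup>2) (idx n))"

definition ket :: "mindex \<Rightarrow> vec" where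
  "ket k = (\<lambda>j. if j = k then 1 else 0)"

definition zero_vec :: vec where
  "zero_vec = (\<lambda>_. 0)"

definition ket_minus :: "mindex \<Rightarrow> nat \<Rightarrow> vec" where
  "ket_minus k i = (if k i = 0 then zero_vec else ket (k(i := k i - 1)))"

definition scal :: "complex \<Rightarrow> vec \<Rightarrow> vec" where
  "scal c v = (\<lambda>j. c * v j)"

definition bounded_op :: "nat \<Rightarrow> op \<Rightarrow> bool" where
  "bounded_op n A \<longleftrightarrow>
     (\<forall>f\<in>l2 n. A f \<in> l2 n) \<and>
     (\<forall>f\<in>l2 n. \<forall>g\<in>l2 n. \<forall>a b. A (\<lambda>k. a * f k + b * g k) = (\<lambda>k. a * A f k + b * A g k)) \<and>
     (\<exists>C. \<forall>f\<in>l2 n. l2_norm n (A f) \<le> C * l2_norm n f)"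

definition is_adjoint :: "nat \<Rightarrow> op \<Rightarrow> op \<Rightarrow> bool" where
  "is_adjoint n A B \<longleftrightarrow> (\<forall>f\<in>l2 n. \<forall>g\<in>l2 n. l2_inner n (A f) g = l2_inner n f (B g))"

definition closed_subspace :: "nat \<Rightarrow> vec set \<Rightarrow> bool" where
  "closed_subspace n V \<longleftrightarrow> V \<subseteq> l2 n \<and> zero_vec \<in> V \<and>
     (\<forall>f\<in>V. \<forall>g\<in>V. \<forall>a b. (\<lambda>k. a * f k + b * g k) \<in> V) \<and>
     (\<forall>g\<in>l2 n. (\<forall>e>0. \<exists>f\<in>V. l2_norm n (\<lambda>k. f k - g k) < e) \<longrightarrow> g \<in> V)"

text \<open>Operators X_i (images of x_i in A(S^{4n-1}_q)) obtained from the images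
  T_1..T_{n+1} of y_1..y_{n+1} of A(Sigma^{2n+1}_q):
  x_i maps to 0 for i < n and x_n maps to y_{n+1}.\<close>
definition Xop :: "nat \<Rightarrow> (nat \<Rightarrow> op) \<Rightarrow> nat \<Rightarrow> op" where
  "Xop n T i = (if i = n then T (n + 1) else (\<lambda>_. zero_vec))"

text \<open>The defining relations of A(S^{4n-1}_q), imposed on operators X_i, Y_i with
  adjoints XS_i, YS_i (i = 1..n), evaluated on all l2 vectors f and all indices m.\<close>
definition sphere_relations ::
  "nat \<Rightarrow> real \<Rightarrow> (nat \<Rightarrow> op) \<Rightarrow> (nat \<Rightarrow> op) \<Rightarrow> (nat \<Rightarrow> op) \<Rightarrow> (nat \<Rightarrow> op) \<Rightarrow> bool" where
  "sphere_relations n q X Y XS YS \<longleftrightarrow>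
   (let Q = complex_of_real q in
   (\<forall>f\<in>l2 n. \<forall>m.
     (\<forall>i\<in>{1..n}. \<forall>j\<in>{1..n}. i < j \<longrightarrow> X i (X j f) m = inverse Q * X j (X i f) m) \<and>
     (\<forall>i\<in>{1..n}. \<forall>j\<in>{1..n}. i > j \<longrightarrow> Y i (Y j f) m = inverse Q * Y j (Y i f) m) \<and>
     (\<forall>i\<in>{1..n}. \<forall>j\<in>{1..n}. i \<noteq> j \<longrightarrow> X i (Y j f) m = inverse Q * Y j (X i f) m) \<and>
     (\<forall>i\<in>{1..n}. Y i (X i f) m = Q\<^sup>2 * X i (Y i f) m
         + (Q\<^sup>2 - 1) * (\<Sum>k = 1..i - 1. Q ^ (i - k) * X k (Y k f) m)) \<and>
     (\<forall>i\<in>{1..n}. X i (XS i f) m = XS i (X i f) m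
         + (1 - Q\<^sup>2) * (\<Sum>k = 1..i - 1. XS k (X k f) m)) \<and>
     (\<forall>i\<in>{1..n}. Y i (YS i f) m = YS i (Y i f) m
         + (1 - Q\<^sup>2) * (Q ^ (2 * (n + 1 - i)) * XS i (X i f) m
                         + (\<Sum>k = 1..n. XS k (X k f) m)
                         + (\<Sum>k = i + 1..n. YS k (Y k f) m))) \<and>
     (\<forall>i\<in>{1..n}. X i (YS i f) m = Q\<^sup>2 * YS i (X i f) m) \<and>
     (\<forall>i\<in>{1..n}. \<forall>j\<in>{1..n}. i \<noteq> j \<longrightarrow> X i (XS j f) m = Q * XS j (X i f) m) \<and>
     (\<forall>i\<in>{1..n}. \<forall>j\<in>{1..n}. i \<noteq> j \<longrightarrow> Y i (YS j f) m = Q * YS j (Y i f) m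
         - (Q\<^sup>2 - 1) * Q ^ (2 * n + 2 - i - j) * XS i (X j f) m) \<and>
     (\<forall>i\<in>{1..n}. \<forall>j\<in>{1..n}. i < j \<longrightarrow> X i (YS j f) m = Q * YS j (X i f) m) \<and>
     (\<forall>i\<in>{1..n}. \<forall>j\<in>{1..n}. i > j \<longrightarrow> X i (YS j f) m = Q * YS j (X i f) m
         + (Q\<^sup>2 - 1) * Q ^ (i - j) * YS i (X j f) m) \<and>
     (\<Sum>i = 1..n. XS i (X i f) m + YS i (Y i f) m) = f m))"

end

theory Submission
  imports Defs
begin
lemma idx_upd: "k \<in> idx n \<Longrightarrow> i \<in> {1..n} \<Longrightarrow> k(i := v) \<in> idx n"
  by (auto simp: idx_def)

lemma idx_dn: "k \<in> idx n \<Longrightarrow> k(i := k i - 1) \<in> idx n"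
  by (auto simp: idx_def)

lemma l2_out: "f \<in> l2 n \<Longrightarrow> k \<notin> idx n \<Longrightarrow> f k = 0"
  by (auto simp: l2_def)

lemma l2_summ: "f \<in> l2 n \<Longrightarrow> (\<lambda>k. (cmod (f k))\<^sup>2) summable_on idx n"
  by (auto simp: l2_def)

lemma l2_dom:
  assumes f: "f \<in> l2 n" and out: "\<And>k. k \<notin> idx n \<Longrightarrow> g k = 0"
    and le: "\<And>k. k \<in> idx n \<Longrightarrow> (cmod (g k))\<^sup>2 \<le> C * (cmod (f k))\<^sup>2"
  shows "g \<in> l2 n" "infsum (\<lambda>k. (cmod (g k))\<^sup>2) (idx n) \<le> C * infsum (\<lambda>k. (cmod (f k))\<^sup>2) (idx n)"
proof -
  have s1: "(\<lambda>k. C * (cmod (f k))\<^sup>2) summable_on idx n"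
    using l2_summ[OF f] by (rule summable_on_cmult_right)
  have s2: "(\<lambda>k. (cmod (g k))\<^sup>2) summable_on idx n"
    by (rule summable_on_comparison_test[OF s1]) (use le in auto)
  then show "g \<in> l2 n" using out by (auto simp: l2_def)
  have "infsum (\<lambda>k. (cmod (g k))\<^sup>2) (idx n) \<le> infsum (\<lambda>k. C * (cmod (f k))\<^sup>2) (idx n)"
    by (rule infsum_mono[OF s2 s1]) (use le in auto)
  also have "\<dots> = C * infsum (\<lambda>k. (cmod (f k))\<^sup>2) (idx n)"
    by (rule infsum_cmult_right) (use l2_summ[OF f] in auto)
  finally show "infsum (\<lambda>k. (cmod (g k))\<^sup>2) (idx n) \<le> C * infsum (\<lambda>k. (cmod (f k))\<^sup>2) (idx n)" .
qed

lemma inj_up: "inj_on (\<lambda>k. k(i := Suc (k i))) A"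
  by (rule inj_onI) (metis fun_upd_idem_iff fun_upd_upd diff_Suc_1 fun_upd_same)

lemma up_image: "i \<in> {1..n} \<Longrightarrow> (\<lambda>k. k(i := Suc (k i))) ` idx n = {k \<in> idx n. 0 < k i}"
proof (intro equalityI subsetI)
  fix x assume "i \<in> {1..n}" "x \<in> (\<lambda>k. k(i := Suc (k i))) ` idx n"
  then show "x \<in> {k \<in> idx n. 0 < k i}" by (auto intro: idx_upd)
next
  fix x assume x: "x \<in> {k \<in> idx n. 0 < k i}"
  then have "x = (x(i := x i - 1))(i := Suc ((x(i := x i - 1)) i))" by auto
  moreover have "x(i := x i - 1) \<in> idx n" using x idx_dn by blast
  ultimately show "x \<in> (\<lambda>k. k(i := Suc (k i))) ` idx n" by (rule image_eqI)
qed

lemma shift_down_l2: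
  assumes f: "f \<in> l2 n" and i: "i \<in> {1..n}"
  defines "g \<equiv> (\<lambda>k. if k \<in> idx n then f (k(i := Suc (k i))) else 0)"
  shows "g \<in> l2 n" "infsum (\<lambda>k. (cmod (g k))\<^sup>2) (idx n) \<le> infsum (\<lambda>k. (cmod (f k))\<^sup>2) (idx n)"
proof -
  let ?u = "\<lambda>k. k(i := Suc (k i))"
  let ?F = "\<lambda>k. (cmod (f k))\<^sup>2"
  have sub: "?u ` idx n \<subseteq> idx n" using up_image[OF i] by auto
  have sF: "?F summable_on ?u ` idx n"
    by (rule summable_on_subset_banach[OF l2_summ[OF f] sub])
  then have "(?F \<circ> ?u) summable_on idx n" by (rule summable_on_reindex[OF inj_up, THEN iffD1])
  then have sG: "(\<lambda>k. (cmod (g k))\<^sup>2) summable_on idx n"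
    by (rule summable_on_cong[THEN iffD1, rotated]) (auto simp: g_def)
  then show "g \<in> l2 n" by (auto simp: l2_def g_def)
  have "infsum (\<lambda>k. (cmod (g k))\<^sup>2) (idx n) = infsum (?F \<circ> ?u) (idx n)"
    by (rule infsum_cong) (auto simp: g_def)
  also have "\<dots> = infsum ?F (?u ` idx n)" by (rule infsum_reindex[OF inj_up, symmetric])
  also have "\<dots> \<le> infsum ?F (idx n)"
    by (rule infsum_mono_neutral[OF sF l2_summ[OF f]]) (use sub in auto)
  finally show "infsum (\<lambda>k. (cmod (g k))\<^sup>2) (idx n) \<le> infsum (\<lambda>k. (cmod (f k))\<^sup>2) (idx n)" .
qed

lemma shift_up_l2:
  assumes f: "f \<in> l2 n" and i: "i \<in> {1..n}"
  defines "g \<equiv> (\<lambda>k. if k \<in> idx n \<and> 0 < k i then f (k(i := k i - 1)) else 0)"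
  shows "g \<in> l2 n" "infsum (\<lambda>k. (cmod (g k))\<^sup>2) (idx n) \<le> infsum (\<lambda>k. (cmod (f k))\<^sup>2) (idx n)"
proof -
  let ?u = "\<lambda>k. k(i := Suc (k i))"
  let ?G = "\<lambda>k. (cmod (g k))\<^sup>2"
  have comp: "\<And>k. k \<in> idx n \<Longrightarrow> (?G \<circ> ?u) k = (cmod (f k))\<^sup>2"
    using i by (auto simp: g_def idx_upd)
  have "(?G \<circ> ?u) summable_on idx n"
    using l2_summ[OF f] by (rule summable_on_cong[THEN iffD1, rotated]) (use comp in auto)
  then have s1: "?G summable_on ?u ` idx n" by (rule summable_on_reindex[OF inj_up, THEN iffD2])
  have eqs: "?u ` idx n = {k \<in> idx n. 0 < k i}" by (rule up_image[OF i])
  have "?G summable_on ?u ` idx n \<longleftrightarrow> ?G summable_on idx n"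
    by (rule summable_on_cong_neutral) (auto simp: eqs g_def)
  with s1 have sG: "?G summable_on idx n" by blast
  then show "g \<in> l2 n" by (auto simp: l2_def g_def)
  have "infsum ?G (idx n) = infsum ?G (?u ` idx n)"
    by (rule infsum_cong_neutral) (auto simp: eqs g_def)
  also have "\<dots> = infsum (?G \<circ> ?u) (idx n)" by (rule infsum_reindex[OF inj_up])
  also have "\<dots> = infsum (\<lambda>k. (cmod (f k))\<^sup>2) (idx n)" by (rule infsum_cong) (use comp in auto)
  finally show "infsum ?G (idx n) \<le> infsum (\<lambda>k. (cmod (f k))\<^sup>2) (idx n)" by simp
qed

definition low :: "nat \<Rightarrow> (mindex \<Rightarrow> real) \<Rightarrow> nat \<Rightarrow> op" where
  "low n w i f = (\<lambda>k. if k \<in> idx n then complex_of_real (w k) * f (k(i := Suc (k i))) else 0)"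

definition rais :: "nat \<Rightarrow> (mindex \<Rightarrow> real) \<Rightarrow> nat \<Rightarrow> op" where
  "rais n w i f = (\<lambda>k. if k \<in> idx n \<and> 0 < k i then complex_of_real (w (k(i := k i - 1))) * f (k(i := k i - 1)) else 0)"

definition diag :: "nat \<Rightarrow> (mindex \<Rightarrow> complex) \<Rightarrow> op" where
  "diag n d f = (\<lambda>k. if k \<in> idx n then d k * f k else 0)"

lemma bounded_opI:
  assumes lin: "\<And>f g a b. A (\<lambda>k. a * f k + b * g k) = (\<lambda>k. a * A f k + b * A g k)"
    and C: "0 \<le> C"
    and b: "\<And>f. f \<in> l2 n \<Longrightarrow> A f \<in> l2 n \<and>
       infsum (\<lambda>k. (cmod (A f k))\<^sup>2) (idx n) \<le> C * infsum (\<lambda>k. (cmod (f k))\<^sup>2) (idx n)"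
  shows "bounded_op n A"
  unfolding bounded_op_def
proof (intro conjI ballI allI exI)
  show "\<And>f. f \<in> l2 n \<Longrightarrow> A f \<in> l2 n" using b by blast
  show "\<And>f g a b. A (\<lambda>k. a * f k + b * g k) = (\<lambda>k. a * A f k + b * A g k)" by (rule lin)
  fix f assume f: "f \<in> l2 n"
  have "l2_norm n (A f) \<le> sqrt (C * infsum (\<lambda>k. (cmod (f k))\<^sup>2) (idx n))"
    unfolding l2_norm_def using b[OF f] by (simp add: real_sqrt_le_mono)
  also have "\<dots> = sqrt C * l2_norm n f" by (simp add: l2_norm_def real_sqrt_mult)
  finally show "l2_norm n (A f) \<le> sqrt C * l2_norm n f" .
qed

lemma bounded_low:
  assumes i: "i \<in> {1..n}" and w: "\<And>k. \<bar>w k\<bar> \<le> 1"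
  shows "bounded_op n (low n w i)"
proof (rule bounded_opI[where C=1])
  show "\<And>f g a b. low n w i (\<lambda>k. a * f k + b * g k) = (\<lambda>k. a * low n w i f k + b * low n w i g k)"
    by (auto simp: low_def fun_eq_iff algebra_simps)
  fix f assume f: "f \<in> l2 n"
  define g where "g \<equiv> (\<lambda>k. if k \<in> idx n then f (k(i := Suc (k i))) else 0)"
  note G = shift_down_l2[OF f i, folded g_def]
  have le: "(cmod (low n w i f k))\<^sup>2 \<le> 1 * (cmod (g k))\<^sup>2" for k
  proof -
    have "cmod (low n w i f k) \<le> cmod (g k)"
      using w[of k] by (auto simp: low_def g_def norm_mult intro: mult_left_le_one_le)
    then show ?thesis by (simp add: power_mono)
  qed
  note D = l2_dom[OF G(1), of "low n w i f" 1]
  have "low n w i f \<in> l2 n" apply (rule D(1)) apply (simp add: low_def) apply (rule le) done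
  moreover have "infsum (\<lambda>k. (cmod (low n w i f k))\<^sup>2) (idx n) \<le> 1 * infsum (\<lambda>k. (cmod (f k))\<^sup>2) (idx n)"
  proof -
    have "infsum (\<lambda>k. (cmod (low n w i f k))\<^sup>2) (idx n) \<le> 1 * infsum (\<lambda>k. (cmod (g k))\<^sup>2) (idx n)"
      apply (rule D(2)) apply (simp add: low_def) apply (rule le) done
    then show ?thesis using G(2) unfolding g_def by linarith
  qed
  ultimately show "low n w i f \<in> l2 n \<and> infsum (\<lambda>k. (cmod (low n w i f k))\<^sup>2) (idx n) \<le> 1 * infsum (\<lambda>k. (cmod (f k))\<^sup>2) (idx n)" by blast
qed simp

lemma bounded_rais:
  assumes i: "i \<in> {1..n}" and w: "\<And>k. \<bar>w k\<bar> \<le> 1"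
  shows "bounded_op n (rais n w i)"
proof (rule bounded_opI[where C=1])
  show "\<And>f g a b. rais n w i (\<lambda>k. a * f k + b * g k) = (\<lambda>k. a * rais n w i f k + b * rais n w i g k)"
    by (auto simp: rais_def fun_eq_iff algebra_simps)
  fix f assume f: "f \<in> l2 n"
  define g where "g \<equiv> (\<lambda>k. if k \<in> idx n \<and> 0 < k i then f (k(i := k i - 1)) else 0)"
  note G = shift_up_l2[OF f i, folded g_def]
  have le: "(cmod (rais n w i f k))\<^sup>2 \<le> 1 * (cmod (g k))\<^sup>2" for k
  proof -
    have "cmod (rais n w i f k) \<le> cmod (g k)"
      using w[of "k(i := k i - 1)"] by (auto simp: rais_def g_def norm_mult intro: mult_left_le_one_le)
    then show ?thesis by (simp add: power_mono)
  qed
  note D = l2_dom[OF G(1), of "rais n w i f" 1]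
  have "rais n w i f \<in> l2 n" apply (rule D(1)) apply (simp add: rais_def) apply (rule le) done
  moreover have "infsum (\<lambda>k. (cmod (rais n w i f k))\<^sup>2) (idx n) \<le> 1 * infsum (\<lambda>k. (cmod (f k))\<^sup>2) (idx n)"
  proof -
    have "infsum (\<lambda>k. (cmod (rais n w i f k))\<^sup>2) (idx n) \<le> 1 * infsum (\<lambda>k. (cmod (g k))\<^sup>2) (idx n)"
      apply (rule D(2)) apply (simp add: rais_def) apply (rule le) done
    then show ?thesis using G(2) unfolding g_def by linarith
  qed
  ultimately show "rais n w i f \<in> l2 n \<and> infsum (\<lambda>k. (cmod (rais n w i f k))\<^sup>2) (idx n) \<le> 1 * infsum (\<lambda>k. (cmod (f k))\<^sup>2) (idx n)" by blast
qed simp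

lemma bounded_diag:
  assumes d: "\<And>k. cmod (d k) \<le> 1"
  shows "bounded_op n (diag n d)"
proof (rule bounded_opI[where C=1])
  show "\<And>f g a b. diag n d (\<lambda>k. a * f k + b * g k) = (\<lambda>k. a * diag n d f k + b * diag n d g k)"
    by (auto simp: diag_def fun_eq_iff algebra_simps)
  fix f assume f: "f \<in> l2 n"
  have le: "(cmod (diag n d f k))\<^sup>2 \<le> 1 * (cmod (f k))\<^sup>2" for k
  proof -
    have "cmod (diag n d f k) \<le> cmod (f k)"
      using d[of k] by (auto simp: diag_def norm_mult intro: mult_left_le_one_le)
    then show ?thesis by (simp add: power_mono)
  qed
  note D = l2_dom[OF f, of "diag n d f" 1]
  have "diag n d f \<in> l2 n" apply (rule D(1)) apply (simp add: diag_def) apply (rule le) done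
  moreover have "infsum (\<lambda>k. (cmod (diag n d f k))\<^sup>2) (idx n) \<le> 1 * infsum (\<lambda>k. (cmod (f k))\<^sup>2) (idx n)"
  proof -
    have "infsum (\<lambda>k. (cmod (diag n d f k))\<^sup>2) (idx n) \<le> 1 * infsum (\<lambda>k. (cmod (f k))\<^sup>2) (idx n)"
      apply (rule D(2)) apply (simp add: diag_def) apply (rule le) done
    then show ?thesis  by linarith
  qed
  ultimately show "diag n d f \<in> l2 n \<and> infsum (\<lambda>k. (cmod (diag n d f k))\<^sup>2) (idx n) \<le> 1 * infsum (\<lambda>k. (cmod (f k))\<^sup>2) (idx n)" by blast
qed simp

lemma adj_low:
  assumes i: "i \<in> {1..n}"
  shows "is_adjoint n (low n w i) (rais n w i)"
  unfolding is_adjoint_def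
proof (intro ballI)
  fix f g :: vec
  let ?u = "\<lambda>k. k(i := Suc (k i))"
  let ?h = "\<lambda>k. cnj (f k) * rais n w i g k"
  have eqs: "?u ` idx n = {k \<in> idx n. 0 < k i}" by (rule up_image[OF i])
  have "l2_inner n f (rais n w i g) = infsum ?h (?u ` idx n)"
    unfolding l2_inner_def by (rule infsum_cong_neutral) (auto simp: eqs rais_def)
  also have "\<dots> = infsum (?h \<circ> ?u) (idx n)" by (rule infsum_reindex[OF inj_up])
  also have "\<dots> = l2_inner n (low n w i f) g"
    unfolding l2_inner_def by (rule infsum_cong) (auto simp: low_def rais_def idx_upd[OF _ i])
  finally show "l2_inner n (low n w i f) g = l2_inner n f (rais n w i g)" by simp
qed

lemma adj_diag: "is_adjoint n (diag n d) (diag n (\<lambda>k. cnj (d k)))"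
  unfolding is_adjoint_def l2_inner_def
  by (intro ballI infsum_cong) (auto simp: diag_def)

definition wt :: "real \<Rightarrow> nat \<Rightarrow> nat \<Rightarrow> mindex \<Rightarrow> real" where
  "wt q n i k = q ^ (\<Sum>j = 1..i - 1. k j) * sqrt (1 - q ^ ((if i = n then 4 else 2) * Suc (k i)))"

definition dd :: "real \<Rightarrow> nat \<Rightarrow> complex \<Rightarrow> mindex \<Rightarrow> complex" where
  "dd q n lam k = lam * complex_of_real (q ^ ((\<Sum>j = 1..n. k j) + k n))"

definition Tm :: "real \<Rightarrow> nat \<Rightarrow> complex \<Rightarrow> nat \<Rightarrow> op" where
  "Tm q n lam i = (if i \<le> n then low n (wt q n i) i else diag n (dd q n lam))"

definition Sm :: "real \<Rightarrow> nat \<Rightarrow> complex \<Rightarrow> nat \<Rightarrow> op" where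
  "Sm q n lam i = (if i \<le> n then rais n (wt q n i) i else diag n (\<lambda>k. cnj (dd q n lam k)))"

lemma sum_upd_in: "finite A \<Longrightarrow> l \<in> A \<Longrightarrow> sum (k(l := v)) A + k l = sum k A + (v::nat)"
  by (simp add: sum.remove[of A l] sum.cong[of "A - {l}" "A - {l}" "k(l := v)" k])

lemma sum_upd_out: "l \<notin> A \<Longrightarrow> sum (k(l := v)) A = sum k A"
  by (rule sum.cong) auto

lemma wt_bounds:
  assumes "0 < q" "q < 1"
  shows "0 < wt q n i k" "wt q n i k \<le> 1"
proof -
  let ?e = "(if i = n then 4 else 2) * Suc (k i)"
  have p: "q ^ ?e < 1" using assms by (intro power_less_one_iff[THEN iffD2]) auto
  have a: "0 < q ^ (\<Sum>j = 1..i - 1. k j)" "q ^ (\<Sum>j = 1..i - 1. k j) \<le> 1"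
    using assms by (auto simp: power_le_one)
  have b: "0 < sqrt (1 - q ^ ?e)" "sqrt (1 - q ^ ?e) \<le> 1"
    using p assms by auto
  show "0 < wt q n i k" unfolding wt_def using a b by simp
  show "wt q n i k \<le> 1" unfolding wt_def using a b by (simp add: mult_le_one)
qed

lemma wt_sq:
  assumes "0 < q" "q < 1"
  shows "(wt q n i k)\<^sup>2 = q ^ (2 * (\<Sum>j = 1..i - 1. k j)) * (1 - q ^ ((if i = n then 4 else 2) * Suc (k i)))"
proof -
  have "q ^ ((if i = n then 4 else 2) * Suc (k i)) \<le> 1" using assms by (simp add: power_le_one)
  then show ?thesis unfolding wt_def by (simp add: power_mult_distrib power_mult[symmetric] mult.commute)
qed

lemma wt_upd_out: "i < l \<Longrightarrow> wt q n i (k(l := v)) = wt q n i k"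
  unfolding wt_def by (subst sum_upd_out) auto

lemma wt_upd_lt: "l \<in> {1..i - 1} \<Longrightarrow> wt q n i (k(l := Suc (k l))) = q * wt q n i k"
proof -
  assume l: "l \<in> {1..i - 1}"
  have "sum (k(l := Suc (k l))) {1..i - 1} + k l = sum k {1..i - 1} + Suc (k l)"
    by (rule sum_upd_in) (use l in auto)
  then have "sum (k(l := Suc (k l))) {1..i - 1} = Suc (sum k {1..i - 1})" by simp
  moreover have "(k(l := Suc (k l))) i = k i" using l by auto
  ultimately show ?thesis unfolding wt_def by simp
qed

lemma dd_upd_lt: "l \<in> {1..n - 1} \<Longrightarrow> dd q n lam (k(l := Suc (k l))) = complex_of_real q * dd q n lam k"
proof -
  assume l: "l \<in> {1..n - 1}"
  have "sum (k(l := Suc (k l))) {1..n} + k l = sum k {1..n} + Suc (k l)"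
    by (rule sum_upd_in) (use l in auto)
  then have "sum (k(l := Suc (k l))) {1..n} = Suc (sum k {1..n})" by simp
  moreover have "(k(l := Suc (k l))) n = k n" using l by auto
  ultimately show ?thesis unfolding dd_def by simp
qed

lemma dd_upd_n: "1 \<le> n \<Longrightarrow> dd q n lam (k(n := Suc (k n))) = complex_of_real (q\<^sup>2) * dd q n lam k"
proof -
  assume l: "1 \<le> n"
  have "sum (k(n := Suc (k n))) {1..n} + k n = sum k {1..n} + Suc (k n)"
    by (rule sum_upd_in) (use l in auto)
  then have "sum (k(n := Suc (k n))) {1..n} = Suc (sum k {1..n})" by simp
  then show ?thesis unfolding dd_def by (simp add: power2_eq_square)
qed

lemma cmod_dd: "cmod lam = 1 \<Longrightarrow> 0 < q \<Longrightarrow> q < 1 \<Longrightarrow> cmod (dd q n lam k) \<le> 1"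
  unfolding dd_def by (simp add: norm_mult norm_power power_le_one)

lemma cnj_dd_dd: "cmod lam = 1 \<Longrightarrow> cnj (dd q n lam k) * dd q n lam k = complex_of_real (q ^ (2 * ((\<Sum>j = 1..n. k j) + k n)))"
proof -
  assume "cmod lam = 1"
  then have l: "cnj lam * lam = 1" by (metis complex_norm_square mult.commute of_real_1 power_one)
  let ?e = "(\<Sum>j = 1..n. k j) + k n"
  have "cnj (dd q n lam k) * dd q n lam k = (cnj lam * lam) * complex_of_real (q ^ ?e * q ^ ?e)"
    unfolding dd_def by (simp add: algebra_simps)
  also have "\<dots> = complex_of_real (q ^ (2 * ?e))" using l by (simp add: mult_2 power_add)
  finally show ?thesis .
qed

lemma low_zero[simp]: "low n w i zero_vec = zero_vec"
  and rais_zero[simp]: "rais n w i zero_vec = zero_vec"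
  and diag_zero[simp]: "diag n d zero_vec = zero_vec"
  by (auto simp: low_def rais_def diag_def zero_vec_def fun_eq_iff)

lemma zero_vec_app[simp]: "zero_vec m = 0" by (simp add: zero_vec_def)

lemma Xop_T: "Xop n (Tm q n lam) i = (if i = n then diag n (dd q n lam) else (\<lambda>_. zero_vec))"
  by (simp add: Xop_def Tm_def)

lemma Xop_S: "Xop n (Sm q n lam) i = (if i = n then diag n (\<lambda>k. cnj (dd q n lam k)) else (\<lambda>_. zero_vec))"
  by (simp add: Xop_def Sm_def)

lemma ket_low:
  assumes k: "k \<in> idx n"
  shows "low n w i (ket k) = scal (complex_of_real (w (k(i := k i - 1)))) (ket_minus k i)"
proof (cases "k i = 0")
  case True
  have ne: "m(i := Suc (m i)) \<noteq> k" for m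
  proof
    assume "m(i := Suc (m i)) = k"
    then have "(m(i := Suc (m i))) i = k i" by simp
    then show False using True by simp
  qed
  show ?thesis
  proof (rule ext)
    fix m show "low n w i (ket k) m = scal (complex_of_real (w (k(i := k i - 1)))) (ket_minus k i) m"
      using ne[of m] True unfolding low_def ket_def ket_minus_def scal_def zero_vec_def by simp
  qed
next
  case False
  have iff: "m(i := Suc (m i)) = k \<longleftrightarrow> m = k(i := k i - 1)" for m
    using False by (auto simp: fun_eq_iff split: if_splits)
  show ?thesis
  proof (rule ext)
    fix m
    show "low n w i (ket k) m = scal (complex_of_real (w (k(i := k i - 1)))) (ket_minus k i) m"
    proof (cases "m = k(i := k i - 1)")
      case True
      have e: "m(i := Suc (m i)) = k" using iff True by blast
      have "m \<in> idx n" using True idx_dn[OF k, of i] by simp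
      then show ?thesis using e True False unfolding low_def ket_def ket_minus_def scal_def by simp
    next
      case F2: False
      have e: "m(i := Suc (m i)) \<noteq> k" using iff F2 by blast
      show ?thesis using e F2 False unfolding low_def ket_def ket_minus_def scal_def by simp
    qed
  qed
qed

lemma wt_dn: "0 < k i \<Longrightarrow> wt q n i (k(i := k i - 1)) = q ^ (\<Sum>j = 1..i - 1. k j) * sqrt (1 - q ^ ((if i = n then 4 else 2) * k i))"
proof -
  assume "0 < k i"
  have "sum (k(i := k i - 1)) {1..i - 1} = sum k {1..i - 1}" by (rule sum_upd_out) auto
  moreover have "Suc (k i - 1) = k i" using \<open>0 < k i\<close> by simp
  ultimately show ?thesis by (simp only: wt_def fun_upd_same)
qed

definition rr :: "real \<Rightarrow> nat \<Rightarrow> nat \<Rightarrow> mindex \<Rightarrow> real" where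
  "rr q n k m = (if 0 < m k then (wt q n k (m(k := m k - 1)))\<^sup>2 else 0)"

lemma rr_eq:
  assumes "0 < q" "q < 1"
  shows "rr q n k m = q ^ (2 * (\<Sum>j = 1..k - 1. m j)) * (1 - q ^ ((if k = n then 4 else 2) * m k))"
proof (cases "m k = 0")
  case True then show ?thesis by (simp add: rr_def)
next
  case False
  then have p: "0 < m k" by simp
  have "q ^ ((if k = n then 4 else 2) * m k) \<le> 1" using assms by (simp add: power_le_one)
  then show ?thesis using p unfolding rr_def wt_dn[where k=m and i=k, OF p]
    by (simp add: power_mult_distrib power_mult[symmetric] mult.commute)
qed

lemma sum_last: "1 \<le> (n::nat) \<Longrightarrow> (\<Sum>j = 1..n. m j) = (\<Sum>j = 1..n - 1. m j) + (m n :: nat)"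
proof -
  assume "1 \<le> n"
  then obtain p where "n = Suc p" by (cases n) auto
  then show ?thesis by (simp add: sum.cl_ivl_Suc)
qed

lemma tele_aux:
  assumes q: "0 < q" "q < 1"
  shows "i + t + 1 = n \<Longrightarrow> (\<Sum>k = i + 1..n. rr q n k m) + q ^ (2 * ((\<Sum>j = 1..n. m j) + m n)) = q ^ (2 * (\<Sum>j = 1..i. m j))"
proof (induction t arbitrary: i)
  case 0
  then have n: "n = i + 1" by simp
  let ?S = "\<Sum>j = 1..i. m j"
  have s: "(\<Sum>j = 1..n. m j) = ?S + m n" using sum_last[of n m] n by simp
  have r: "rr q n n m = q ^ (2 * ?S) * (1 - q ^ (4 * m n))" using rr_eq[OF q, of n n m] n by simp
  have e: "q ^ (2 * (?S + m n + m n)) = q ^ (2 * ?S) * q ^ (4 * m n)"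
    by (simp add: power_add[symmetric] algebra_simps)
  have sp: "(\<Sum>k = i + 1..n. rr q n k m) = rr q n n m" using n by simp
  show ?case unfolding sp s e r by (simp add: algebra_simps)
next
  case (Suc t)
  then have n: "Suc i + t + 1 = n" by simp
  have IH: "(\<Sum>k = Suc i + 1..n. rr q n k m) + q ^ (2 * ((\<Sum>j = 1..n. m j) + m n)) = q ^ (2 * (\<Sum>j = 1..Suc i. m j))"
    using Suc.IH[OF n] by simp
  let ?S = "\<Sum>j = 1..i. m j"
  have s: "(\<Sum>j = 1..Suc i. m j) = ?S + m (Suc i)" by (simp add: sum.cl_ivl_Suc)
  have sp: "(\<Sum>k = i + 1..n. rr q n k m) = rr q n (Suc i) m + (\<Sum>k = Suc i + 1..n. rr q n k m)"
    using n by (simp add: sum.atLeast_Suc_atMost)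
  have r: "rr q n (Suc i) m = q ^ (2 * ?S) * (1 - q ^ (2 * m (Suc i)))" using rr_eq[OF q, of n "Suc i" m] n by simp
  have e: "q ^ (2 * (?S + m (Suc i))) = q ^ (2 * ?S) * q ^ (2 * m (Suc i))"
    by (simp add: power_add[symmetric] algebra_simps)
  show ?case unfolding sp using IH unfolding s e r by (simp add: algebra_simps)
qed

lemma tele:
  assumes "0 < q" "q < 1" "i < n"
  shows "(\<Sum>k = i + 1..n. rr q n k m) + q ^ (2 * ((\<Sum>j = 1..n. m j) + m n)) = q ^ (2 * (\<Sum>j = 1..i. m j))"
  using tele_aux[OF assms(1,2), of i "n - i - 1" n m] assms(3) by simp

context
  fixes q :: real and n :: nat and lam :: complex
  assumes q0: "0 < q" and q1: "q < 1" and n1: "1 \<le> n" and lam1: "cmod lam = 1"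
begin

lemma T_app: "i \<le> n \<Longrightarrow> Tm q n lam i g m = (if m \<in> idx n then complex_of_real (wt q n i m) * g (m(i := Suc (m i))) else 0)"
  by (simp add: Tm_def low_def)

lemma S_app: "i \<le> n \<Longrightarrow> Sm q n lam i g m = (if m \<in> idx n \<and> 0 < m i then complex_of_real (wt q n i (m(i := m i - 1))) * g (m(i := m i - 1)) else 0)"
  by (simp add: Sm_def rais_def)

lemma X_app: "Xop n (Tm q n lam) i g m = (if i = n \<and> m \<in> idx n then dd q n lam m * g m else 0)"
  by (simp add: Xop_T diag_def)

lemma XS_app: "Xop n (Sm q n lam) i g m = (if i = n \<and> m \<in> idx n then cnj (dd q n lam m) * g m else 0)"
  by (simp add: Xop_S diag_def)

lemma X_zero: "Xop n (Tm q n lam) i g = (if i = n then Xop n (Tm q n lam) i g else zero_vec)"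
  by (simp add: Xop_T)

lemma XS_zero: "Xop n (Sm q n lam) i g = (if i = n then Xop n (Sm q n lam) i g else zero_vec)"
  by (simp add: Xop_S)

lemma T_zero: "i \<le> n \<Longrightarrow> Tm q n lam i zero_vec m = 0" by (simp add: T_app)
lemma S_zero: "i \<le> n \<Longrightarrow> Sm q n lam i zero_vec m = 0" by (simp add: S_app)
lemma X0: "Xop n (Tm q n lam) i zero_vec m = 0" by (simp add: X_app)
lemma XS0: "Xop n (Sm q n lam) i zero_vec m = 0" by (simp add: XS_app)

lemmas apps = T_app S_app X_app XS_app

lemma qnz: "complex_of_real q \<noteq> 0" using q0 by simp

lemma R1: "i \<in> {1..n} \<Longrightarrow> j \<in> {1..n} \<Longrightarrow> i < j \<Longrightarrow>
  Xop n (Tm q n lam) i (Xop n (Tm q n lam) j f) m = inverse (complex_of_real q) * Xop n (Tm q n lam) j (Xop n (Tm q n lam) i f) m"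
  by (subst (1 2) X_zero) (simp add: X0 X_app)

lemma R2:
  assumes i: "i \<in> {1..n}" and j: "j \<in> {1..n}" and ij: "i > j"
  shows "Tm q n lam i (Tm q n lam j f) m = inverse (complex_of_real q) * Tm q n lam j (Tm q n lam i f) m"
proof (cases "m \<in> idx n")
  case False then show ?thesis using i j by (simp add: T_app)
next
  case True
  have I: "m(i := Suc (m i)) \<in> idx n" "m(j := Suc (m j)) \<in> idx n" using True i j by (auto intro: idx_upd)
  have w1: "wt q n j (m(i := Suc (m i))) = wt q n j m" using ij by (rule wt_upd_out)
  have w2: "wt q n i (m(j := Suc (m j))) = q * wt q n i m" using ij j by (intro wt_upd_lt) auto
  have tw: "m(i := Suc (m i), j := Suc (m j)) = m(j := Suc (m j), i := Suc (m i))"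
    using ij by (auto simp: fun_eq_iff)
  show ?thesis using i j ij True I qnz by (simp add: T_app w1 w2 tw)
qed

lemma R3:
  assumes i: "i \<in> {1..n}" and j: "j \<in> {1..n}" and ij: "i \<noteq> j"
  shows "Xop n (Tm q n lam) i (Tm q n lam j f) m = inverse (complex_of_real q) * Tm q n lam j (Xop n (Tm q n lam) i f) m"
proof (cases "i = n \<and> m \<in> idx n")
  case False
  then show ?thesis using i j
    by (subst (1 2) X_zero) (auto simp: T_app X_app T_zero)
next
  case True
  have I: "m(j := Suc (m j)) \<in> idx n" using True j by (auto intro: idx_upd)
  have d: "dd q n lam (m(j := Suc (m j))) = complex_of_real q * dd q n lam m"
    using i j ij True by (intro dd_upd_lt) auto
  show ?thesis using i j True I qnz by (simp add: T_app X_app d)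
qed

lemma R4:
  assumes i: "i \<in> {1..n}"
  shows "Tm q n lam i (Xop n (Tm q n lam) i f) m = (complex_of_real q)\<^sup>2 * Xop n (Tm q n lam) i (Tm q n lam i f) m
         + ((complex_of_real q)\<^sup>2 - 1) * (\<Sum>k = 1..i - 1. (complex_of_real q) ^ (i - k) * Xop n (Tm q n lam) k (Tm q n lam k f) m)"
proof -
  have s: "(\<Sum>k = 1..i - 1. (complex_of_real q) ^ (i - k) * Xop n (Tm q n lam) k (Tm q n lam k f) m) = 0"
    using i by (intro sum.neutral) (auto simp: X_app)
  show ?thesis
  proof (cases "i = n \<and> m \<in> idx n")
    case False
    then show ?thesis using i unfolding s
      by (subst (1 2) X_zero) (auto simp: T_app X_app T_zero)
  next
    case True
    have I: "m(n := Suc (m n)) \<in> idx n" using True n1 by (auto intro: idx_upd)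
    have d: "dd q n lam (m(n := Suc (m n))) = complex_of_real (q\<^sup>2) * dd q n lam m"
      using n1 by (rule dd_upd_n)
    show ?thesis using i True I unfolding s by (simp add: T_app X_app d)
  qed
qed

lemma R5:
  assumes i: "i \<in> {1..n}"
  shows "Xop n (Tm q n lam) i (Xop n (Sm q n lam) i f) m = Xop n (Sm q n lam) i (Xop n (Tm q n lam) i f) m
         + (1 - (complex_of_real q)\<^sup>2) * (\<Sum>k = 1..i - 1. Xop n (Sm q n lam) k (Xop n (Tm q n lam) k f) m)"
proof -
  have "(\<Sum>k = 1..i - 1. Xop n (Sm q n lam) k (Xop n (Tm q n lam) k f) m) = 0"
    using i by (intro sum.neutral) (auto simp: XS_app)
  then show ?thesis using i by (simp add: X_app XS_app)
qed

lemma R7: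
  assumes i: "i \<in> {1..n}"
  shows "Xop n (Tm q n lam) i (Sm q n lam i f) m = (complex_of_real q)\<^sup>2 * Sm q n lam i (Xop n (Tm q n lam) i f) m"
proof (cases "i = n \<and> m \<in> idx n \<and> 0 < m n")
  case False
  then show ?thesis using i
    by (subst (1 2) X_zero) (auto simp: S_app X_app S_zero)
next
  case True
  have I: "m(n := m n - 1) \<in> idx n" using True idx_dn[of m n n] by simp
  have e: "(m(n := m n - 1))(n := Suc ((m(n := m n - 1)) n)) = m" using True by auto
  have d: "dd q n lam m = complex_of_real (q\<^sup>2) * dd q n lam (m(n := m n - 1))"
    using dd_upd_n[OF n1, of q lam "m(n := m n - 1)"] unfolding e .
  show ?thesis using i True I by (simp add: S_app X_app d)
qed

lemma R8:
  assumes i: "i \<in> {1..n}" and j: "j \<in> {1..n}" and ij: "i \<noteq> j"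
  shows "Xop n (Tm q n lam) i (Xop n (Sm q n lam) j f) m = complex_of_real q * Xop n (Sm q n lam) j (Xop n (Tm q n lam) i f) m"
  using ij by (simp add: Xop_T Xop_S)

lemma R9:
  assumes i: "i \<in> {1..n}" and j: "j \<in> {1..n}" and ij: "i \<noteq> j"
  shows "Tm q n lam i (Sm q n lam j f) m = complex_of_real q * Sm q n lam j (Tm q n lam i f) m
         - ((complex_of_real q)\<^sup>2 - 1) * complex_of_real q ^ (2 * n + 2 - i - j) * Xop n (Sm q n lam) i (Xop n (Tm q n lam) j f) m"
proof -
  have x: "Xop n (Sm q n lam) i (Xop n (Tm q n lam) j f) m = 0"
    using ij by (simp add: Xop_T Xop_S)
  show ?thesis
  proof (cases "m \<in> idx n \<and> 0 < m j")
    case False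
    then show ?thesis using i j ij unfolding x by (auto simp: T_app S_app)
  next
    case True
    let ?a = "m(j := m j - 1)"
    have I: "m(i := Suc (m i)) \<in> idx n" "?a \<in> idx n" using True i idx_dn[of m n j] by (auto intro: idx_upd)
    have tw: "m(i := Suc (m i), j := m j - Suc 0) = ?a(i := Suc (?a i))"
      using ij by (auto simp: fun_eq_iff)
    have key: "wt q n i m * wt q n j (?a(i := Suc (?a i))) = q * (wt q n j ?a * wt q n i ?a)"
    proof (cases "i < j")
      case True
      have "wt q n j (?a(i := Suc (?a i))) = q * wt q n j ?a" using True i by (intro wt_upd_lt) auto
      moreover have "wt q n i ?a = wt q n i m" using True by (rule wt_upd_out)
      ultimately show ?thesis by simp
    next
      case False
      then have ji: "j < i" using ij by simp
      have "wt q n j (?a(i := Suc (?a i))) = wt q n j ?a" using ji by (rule wt_upd_out)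
      moreover have e: "?a(j := Suc (?a j)) = m" using \<open>m \<in> idx n \<and> 0 < m j\<close> by auto
      have "wt q n i (?a(j := Suc (?a j))) = q * wt q n i ?a" using ji j by (intro wt_upd_lt) auto
      then have "wt q n i m = q * wt q n i ?a" unfolding e .
      ultimately show ?thesis by simp
    qed
    have key': "complex_of_real (wt q n i m) * complex_of_real (wt q n j (?a(i := Suc (?a i))))
       = complex_of_real q * (complex_of_real (wt q n j ?a) * complex_of_real (wt q n i ?a))"
      using key by (metis of_real_mult)
    have lhs: "Tm q n lam i (Sm q n lam j f) m = complex_of_real (wt q n i m) * complex_of_real (wt q n j (?a(i := Suc (?a i)))) * f (?a(i := Suc (?a i)))"
      using True i j ij I by (simp add: T_app S_app tw)
    have rhs: "Sm q n lam j (Tm q n lam i f) m = complex_of_real (wt q n j ?a) * complex_of_real (wt q n i ?a) * f (?a(i := Suc (?a i)))"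
      using True i j ij I by (simp add: T_app S_app)
    show ?thesis unfolding x lhs rhs using key' by simp
  qed
qed

lemma R10:
  assumes i: "i \<in> {1..n}" and j: "j \<in> {1..n}" and ij: "i < j"
  shows "Xop n (Tm q n lam) i (Sm q n lam j f) m = complex_of_real q * Sm q n lam j (Xop n (Tm q n lam) i f) m"
  using i j ij by (simp add: Xop_T S_zero)

lemma R11:
  assumes i: "i \<in> {1..n}" and j: "j \<in> {1..n}" and ij: "i > j"
  shows "Xop n (Tm q n lam) i (Sm q n lam j f) m = complex_of_real q * Sm q n lam j (Xop n (Tm q n lam) i f) m
         + ((complex_of_real q)\<^sup>2 - 1) * complex_of_real q ^ (i - j) * Sm q n lam i (Xop n (Tm q n lam) j f) m"
proof -
  have x: "Sm q n lam i (Xop n (Tm q n lam) j f) m = 0"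
    using i ij by (simp add: Xop_T S_zero)
  show ?thesis
  proof (cases "i = n \<and> m \<in> idx n \<and> 0 < m j")
    case False
    then show ?thesis unfolding x using i j ij
      by (cases "i = n") (auto simp: Xop_T S_app diag_def)
  next
    case True
    let ?a = "m(j := m j - 1)"
    have I: "?a \<in> idx n" using True idx_dn[of m n j] by simp
    have e: "?a(j := Suc (?a j)) = m" using True by auto
    have d: "dd q n lam m = complex_of_real q * dd q n lam ?a"
      using dd_upd_lt[of j n q lam ?a] True i j ij unfolding e by auto
    show ?thesis unfolding x using True I i j ij by (simp add: X_app S_app d)
  qed
qed


lemma YYS_app: "k \<in> {1..n} \<Longrightarrow> m \<in> idx n \<Longrightarrow> Tm q n lam k (Sm q n lam k f) m = complex_of_real ((wt q n k m)\<^sup>2) * f m"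
  using idx_upd[of m n k] by (simp add: T_app S_app power2_eq_square)

lemma YSY_app: "k \<in> {1..n} \<Longrightarrow> m \<in> idx n \<Longrightarrow> Sm q n lam k (Tm q n lam k f) m = complex_of_real (rr q n k m) * f m"
proof -
  assume k: "k \<in> {1..n}" and m: "m \<in> idx n"
  show ?thesis
  proof (cases "0 < m k")
    case True
    have e: "(m(k := m k - 1))(k := Suc (m k - 1)) = m" using True by auto
    show ?thesis using True k m idx_dn[of m n k] by (simp add: T_app S_app rr_def power2_eq_square e)
  qed (use k m in \<open>simp add: S_app rr_def\<close>)
qed

lemma XSX_app: "m \<in> idx n \<Longrightarrow> Xop n (Sm q n lam) k (Xop n (Tm q n lam) k f) m =
   (if k = n then complex_of_real (q ^ (2 * ((\<Sum>j = 1..n. m j) + m n))) * f m else 0)"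
  using cnj_dd_dd[OF lam1, of q n m] by (simp add: X_app XS_app)

lemma R6:
  assumes i: "i \<in> {1..n}"
  shows "Tm q n lam i (Sm q n lam i f) m = Sm q n lam i (Tm q n lam i f) m
         + (1 - (complex_of_real q)\<^sup>2) * ((complex_of_real q) ^ (2 * (n + 1 - i)) * Xop n (Sm q n lam) i (Xop n (Tm q n lam) i f) m
                         + (\<Sum>k = 1..n. Xop n (Sm q n lam) k (Xop n (Tm q n lam) k f) m)
                         + (\<Sum>k = i + 1..n. Sm q n lam k (Tm q n lam k f) m))"
proof (cases "m \<in> idx n")
  case False
  then show ?thesis using i by (simp add: T_app S_app X_app XS_app)
next
  case True
  let ?D = "q ^ (2 * ((\<Sum>j = 1..n. m j) + m n))"
  let ?R = "\<Sum>k = i + 1..n. rr q n k m"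
  have s1: "(\<Sum>k = 1..n. Xop n (Sm q n lam) k (Xop n (Tm q n lam) k f) m) = complex_of_real ?D * f m"
    using True n1 by (simp add: XSX_app)
  have s2: "(\<Sum>k = i + 1..n. Sm q n lam k (Tm q n lam k f) m) = complex_of_real ?R * f m"
    using True i by (simp add: YSY_app sum_distrib_right)
  have s3: "Xop n (Sm q n lam) i (Xop n (Tm q n lam) i f) m = (if i = n then complex_of_real ?D * f m else 0)"
    using True by (simp add: XSX_app)
  let ?S = "\<Sum>j = 1..i - 1. m j"
  have Si: "(\<Sum>j = 1..i. m j) = ?S + m i" using sum_last[of i m] i by simp
  have E: "(wt q n i m)\<^sup>2 = rr q n i m + (1 - q\<^sup>2) * ((if i = n then q ^ (2 * (n + 1 - i)) * ?D else 0) + ?D + ?R)"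
  proof (cases "i = n")
    case False
    then have "i < n" using i by simp
    from tele[OF q0 q1 this, of m] have T: "?R + ?D = q ^ (2 * (?S + m i))" unfolding Si .
    have ex: "2 * Suc (m i) = 2 * m i + 2" by simp
    have w: "(wt q n i m)\<^sup>2 = q ^ (2 * ?S) * (1 - q ^ (2 * m i) * q\<^sup>2)"
      using wt_sq[OF q0 q1, of n i m] False unfolding ex power_add by (simp add: power2_eq_square)
    have r: "rr q n i m = q ^ (2 * ?S) * (1 - q ^ (2 * m i))" using rr_eq[OF q0 q1, of n i m] False by simp
    have e: "q ^ (2 * (?S + m i)) = q ^ (2 * ?S) * q ^ (2 * m i)" by (simp add: power_add[symmetric] algebra_simps)
    have T': "?R + ?D = q ^ (2 * ?S) * q ^ (2 * m i)" using T e by simp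
    have alg: "P * (1 - B * q\<^sup>2) = P * (1 - B) + (1 - q\<^sup>2) * (D + R)" if h: "R + D = P * B" for P B D R :: real
    proof -
      have h': "D + R = P * B" using h by simp
      show ?thesis unfolding h' by (simp add: algebra_simps)
    qed
    show ?thesis using alg[OF T'] False unfolding w r by simp
  next
    case True
    have R0: "?R = 0" using True by simp
    have sn: "(\<Sum>j = 1..n. m j) = ?S + m n" using Si True by simp
    have D: "?D = q ^ (2 * ?S) * q ^ (4 * m n)" unfolding sn by (simp add: power_add[symmetric] algebra_simps)
    have ex: "4 * Suc (m n) = 4 * m n + 4" by simp
    have w: "(wt q n i m)\<^sup>2 = q ^ (2 * ?S) * (1 - q ^ (4 * m n) * q ^ 4)"
    proof -
      have p4: "q ^ (4 + 4 * m n) = q ^ (4 * m n) * q ^ 4" by (simp add: power_add mult.commute)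
      show ?thesis using wt_sq[OF q0 q1, of n i m] True by (simp add: p4)
    qed
    have r: "rr q n i m = q ^ (2 * ?S) * (1 - q ^ (4 * m n))" using rr_eq[OF q0 q1, of n i m] True by simp
    have q4: "q ^ 4 = q\<^sup>2 * q\<^sup>2" by (simp add: power_add[symmetric])
    have alg: "P * (1 - M * q ^ 4) = P * (1 - M) + (1 - q\<^sup>2) * (q\<^sup>2 * (P * M) + P * M + 0)" for P M :: real
      by algebra
    have nn: "2 * (n + 1 - n) = 2" by simp
    show ?thesis unfolding w r R0 D using True alg by (simp only: nn if_True simp_thms)
  qed
  have cx1: "complex_of_real (a + (1 - q\<^sup>2) * (q\<^sup>2 * D + D + R)) * F = complex_of_real a * F + (1 - (complex_of_real q)\<^sup>2) * ((complex_of_real q)\<^sup>2 * (complex_of_real D * F) + complex_of_real D * F + complex_of_real R * F)" for a D R F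
    by (simp add: algebra_simps)
  have cx2: "complex_of_real (a + (1 - q\<^sup>2) * (D + R)) * F = complex_of_real a * F + (1 - (complex_of_real q)\<^sup>2) * (complex_of_real D * F + complex_of_real R * F)" for a D R F
    by (simp add: algebra_simps)
  show ?thesis
  proof (cases "i = n")
    case T: True
    have E': "(wt q n i m)\<^sup>2 = rr q n i m + (1 - q\<^sup>2) * (q\<^sup>2 * ?D + ?D + ?R)" using E T by simp
    have nn: "2 * (n + 1 - i) = 2" using T by simp
    show ?thesis unfolding s1 s2 s3 YYS_app[OF i True] YSY_app[OF i True] E' cx1 nn using T by simp
  next
    case F: False
    have E': "(wt q n i m)\<^sup>2 = rr q n i m + (1 - q\<^sup>2) * (?D + ?R)" using E F by simp
    show ?thesis unfolding s1 s2 s3 YYS_app[OF i True] YSY_app[OF i True] E' cx2 using F by simp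
  qed
qed

lemma R12:
  assumes f: "f \<in> l2 n"
  shows "(\<Sum>i = 1..n. Xop n (Sm q n lam) i (Xop n (Tm q n lam) i f) m + Sm q n lam i (Tm q n lam i f) m) = f m"
proof (cases "m \<in> idx n")
  case False
  then show ?thesis using l2_out[OF f False] by (simp add: T_app S_app X_app XS_app)
next
  case True
  have T: "(\<Sum>k = 0 + 1..n. rr q n k m) + q ^ (2 * ((\<Sum>j = 1..n. m j) + m n)) = 1"
    using tele[OF q0 q1, of 0 n m] n1 by simp
  have "(\<Sum>i = 1..n. Xop n (Sm q n lam) i (Xop n (Tm q n lam) i f) m + Sm q n lam i (Tm q n lam i f) m)
     = complex_of_real (q ^ (2 * ((\<Sum>j = 1..n. m j) + m n))) * f m + complex_of_real (\<Sum>k = 1..n. rr q n k m) * f m"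
    using True n1 by (simp add: sum.distrib XSX_app YSY_app sum_distrib_right)
  also have "\<dots> = complex_of_real ((\<Sum>k = 0 + 1..n. rr q n k m) + q ^ (2 * ((\<Sum>j = 1..n. m j) + m n))) * f m"
    by (simp add: algebra_simps)
  also have "\<dots> = f m" unfolding T by simp
  finally show ?thesis .
qed

end

lemma ket_l2: "k \<in> idx n \<Longrightarrow> ket k \<in> l2 n"
proof -
  assume k: "k \<in> idx n"
  have "(\<lambda>j. (cmod (ket k j))\<^sup>2) summable_on {k}" by simp
  moreover have "(\<lambda>j. (cmod (ket k j))\<^sup>2) summable_on {k} \<longleftrightarrow> (\<lambda>j. (cmod (ket k j))\<^sup>2) summable_on idx n"
    by (rule summable_on_cong_neutral) (use k in \<open>auto simp: ket_def\<close>)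
  ultimately show ?thesis using k by (auto simp: l2_def ket_def)
qed

lemma cs_lin: "closed_subspace n V \<Longrightarrow> f \<in> V \<Longrightarrow> g \<in> V \<Longrightarrow> (\<lambda>k. a * f k + b * g k) \<in> V"
  by (simp add: closed_subspace_def)

lemma cs_scal: "closed_subspace n V \<Longrightarrow> f \<in> V \<Longrightarrow> (\<lambda>k. a * f k) \<in> V"
  using cs_lin[of n V f f a 0] by simp

lemma cs_sub: "closed_subspace n V \<Longrightarrow> V \<subseteq> l2 n"
  by (simp add: closed_subspace_def)

lemma cs_closed: "closed_subspace n V \<Longrightarrow> g \<in> l2 n \<Longrightarrow> (\<And>e. e > 0 \<Longrightarrow> \<exists>f\<in>V. l2_norm n (\<lambda>k. f k - g k) < e) \<Longrightarrow> g \<in> V"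
  unfolding closed_subspace_def by blast

lemma idx_nonzero:
  assumes "k \<in> idx n" "k \<noteq> (\<lambda>_. 0)"
  obtains j where "j \<in> {1..n}" "0 < k j"
proof -
  obtain j where "k j \<noteq> 0" using assms(2) by auto
  moreover then have "j \<in> {1..n}" using assms(1) by (auto simp: idx_def)
  ultimately show ?thesis using that by auto
qed

lemma sum_dn_less:
  fixes k :: mindex and n :: nat
  assumes "j \<in> {1..n}" "0 < k j"
  shows "(\<Sum>i = 1..n. (k(j := k j - 1)) i) < (\<Sum>i = 1..n. k i)"
proof -
  have "sum (k(j := k j - 1)) {1..n} + k j = sum k {1..n} + (k j - 1)"
    by (rule sum_upd_in) (use assms in auto)
  then show ?thesis using assms(2) by simp
qed

lemma rais_ket:
  assumes k: "k \<in> idx n" and j: "j \<in> {1..n}"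
  shows "rais n w j (ket k) = (\<lambda>m. complex_of_real (w k) * ket (k(j := Suc (k j))) m)"
proof (rule ext)
  fix m
  show "rais n w j (ket k) m = complex_of_real (w k) * ket (k(j := Suc (k j))) m"
  proof (cases "m = k(j := Suc (k j))")
    case True
    have "m \<in> idx n" using True idx_upd[OF k j] by simp
    moreover have "m(j := m j - 1) = k" using True by auto
    ultimately show ?thesis using True unfolding rais_def ket_def by simp
  next
    case False
    have "m \<in> idx n \<and> 0 < m j \<Longrightarrow> m(j := m j - 1) \<noteq> k"
    proof
      assume a: "m \<in> idx n \<and> 0 < m j" "m(j := m j - 1) = k"
      then have "m = k(j := Suc (k j))" by (auto simp: fun_eq_iff split: if_splits)
      then show False using False by simp
    qed
    then show ?thesis using False unfolding rais_def ket_def by auto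
  qed
qed

lemma diag_pow: "g \<in> l2 n \<Longrightarrow> (diag n d ^^ p) g = (\<lambda>k. if k \<in> idx n then d k ^ p * g k else 0)"
proof (induction p)
  case 0
  then show ?case using l2_out[OF 0] by (auto simp: fun_eq_iff)
next
  case (Suc p)
  then show ?case by (auto simp: diag_def fun_eq_iff)
qed

context
  fixes q :: real and n :: nat and lam :: complex
  assumes q0: "0 < q" and q1: "q < 1" and n1: "1 \<le> n" and lam1: "cmod lam = 1"
begin

lemma step1:
  assumes CS: "closed_subspace n V"
    and Inv: "\<forall>i\<in>{1..n+1}. \<forall>f\<in>V. Tm q n lam i f \<in> V \<and> Sm q n lam i f \<in> V"
  shows "f \<in> V \<Longrightarrow> k \<in> idx n \<Longrightarrow> f k \<noteq> 0 \<Longrightarrow> \<exists>g\<in>V. g (\<lambda>_. 0) \<noteq> 0"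
proof (induction "\<Sum>i = 1..n. k i" arbitrary: k f rule: less_induct)
  case less
  show ?case
  proof (cases "k = (\<lambda>_. 0)")
    case True
    then show ?thesis using less.prems by blast
  next
    case False
    obtain j where j: "j \<in> {1..n}" "0 < k j" using idx_nonzero[OF less.prems(2) False] .
    let ?k' = "k(j := k j - 1)"
    have I: "?k' \<in> idx n" using idx_dn[OF less.prems(2)] by simp
    have e: "?k'(j := Suc (?k' j)) = k" using j by auto
    have V: "Tm q n lam j f \<in> V" using Inv less.prems(1) j by auto
    have "Tm q n lam j f ?k' = complex_of_real (wt q n j ?k') * f (?k'(j := Suc (?k' j)))"
      using j I by (simp add: Tm_def low_def)
    also have "\<dots> = complex_of_real (wt q n j ?k') * f k" by (simp only: e)
    finally have "Tm q n lam j f ?k' = complex_of_real (wt q n j ?k') * f k" .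
    moreover have "wt q n j ?k' \<noteq> 0" using wt_bounds(1)[OF q0 q1] by (metis less_irrefl)
    ultimately have "Tm q n lam j f ?k' \<noteq> 0" using less.prems(3) by simp
    then show ?thesis using less.hyps[OF sum_dn_less[where k=k and j=j and n=n, OF j] V I] by blast
  qed
qed

lemma step2:
  assumes CS: "closed_subspace n V"
    and Inv: "\<forall>i\<in>{1..n+1}. \<forall>f\<in>V. Tm q n lam i f \<in> V \<and> Sm q n lam i f \<in> V"
    and gV: "g \<in> V" and g0: "g (\<lambda>_. 0) \<noteq> 0"
  shows "ket (\<lambda>_. 0) \<in> V"
proof -
  let ?z = "(\<lambda>_::nat. 0::nat)"
  have z: "?z \<in> idx n" by (simp add: idx_def)
  have gl: "g \<in> l2 n" using cs_sub[OF CS] gV by auto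
  have T1: "Tm q n lam (n+1) = diag n (dd q n lam)" by (simp add: Tm_def)
  have powV: "((Tm q n lam (n+1)) ^^ p) g \<in> V" for p
    by (induction p) (use Inv gV in auto)
  have lam0: "lam \<noteq> 0" using lam1 by auto
  define h where "h p = (\<lambda>k. (inverse lam) ^ p * ((Tm q n lam (n+1)) ^^ p) g k)" for p
  have hV: "h p \<in> V" for p unfolding h_def by (rule cs_scal[OF CS powV])
  have hk: "h p k = (if k \<in> idx n then complex_of_real ((q ^ ((\<Sum>j = 1..n. k j) + k n)) ^ p) * g k else 0)" for p k
  proof -
    have "inverse lam ^ p * (lam * complex_of_real (q ^ ((\<Sum>j = 1..n. k j) + k n))) ^ p
          = complex_of_real ((q ^ ((\<Sum>j = 1..n. k j) + k n)) ^ p)"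
      using lam0 by (simp add: power_mult_distrib power_inverse)
    then show ?thesis unfolding h_def T1 diag_pow[OF gl] dd_def by (simp add: mult.assoc)
  qed
  define t where "t = (\<lambda>k. g ?z * ket ?z k)"
  have tl2: "t \<in> l2 n"
  proof (rule l2_dom(1)[OF ket_l2[OF z], of t "(cmod (g ?z))\<^sup>2"])
    show "\<And>k. k \<notin> idx n \<Longrightarrow> t k = 0" using z by (auto simp: t_def ket_def)
    show "\<And>k. k \<in> idx n \<Longrightarrow> (cmod (t k))\<^sup>2 \<le> (cmod (g ?z))\<^sup>2 * (cmod (ket ?z k))\<^sup>2"
      by (simp add: t_def norm_mult power_mult_distrib)
  qed
  have W: "1 \<le> (\<Sum>j = 1..n. k j) + k n" if kk: "k \<in> idx n" "k \<noteq> ?z" for k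
  proof -
    obtain j where j: "j \<in> {1..n}" "0 < k j" using idx_nonzero[of k n] kk by blast
    have "k j \<le> (\<Sum>j = 1..n. k j)" using j by (intro member_le_sum) auto
    then show ?thesis using j by simp
  qed
  have dle: "(cmod (h p k - t k))\<^sup>2 \<le> (q ^ p)\<^sup>2 * (cmod (g k))\<^sup>2" if k: "k \<in> idx n" for k p
  proof (cases "k = ?z")
    case True
    then show ?thesis using k by (simp add: hk t_def ket_def)
  next
    case False
    let ?W = "(\<Sum>j = 1..n. k j) + k n"
    have tk: "t k = 0" using False by (simp add: t_def ket_def)
    have qW: "q ^ ?W \<le> q" using W[OF k False] q0 q1 power_decreasing[of 1 ?W q] by simp
    have qWp: "(q ^ ?W) ^ p \<le> q ^ p" by (rule power_mono[OF qW]) (use q0 in simp)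
    have "cmod (h p k - t k) = (q ^ ?W) ^ p * cmod (g k)"
      using k tk q0 by (simp add: hk norm_mult norm_power)
    also have "\<dots> \<le> q ^ p * cmod (g k)" by (rule mult_right_mono[OF qWp]) simp
    finally have "cmod (h p k - t k) \<le> q ^ p * cmod (g k)" .
    then have "(cmod (h p k - t k))\<^sup>2 \<le> (q ^ p * cmod (g k))\<^sup>2" by (rule power_mono) simp
    then show ?thesis by (simp add: power_mult_distrib)
  qed
  have dout: "h p k - t k = 0" if "k \<notin> idx n" for k p
  proof -
    have "k \<noteq> ?z" using that z by auto
    then show ?thesis using that by (simp add: hk t_def ket_def)
  qed
  have nle: "l2_norm n (\<lambda>k. h p k - t k) \<le> q ^ p * l2_norm n g" for p
  proof -
    have "infsum (\<lambda>k. (cmod (h p k - t k))\<^sup>2) (idx n) \<le> (q ^ p)\<^sup>2 * infsum (\<lambda>k. (cmod (g k))\<^sup>2) (idx n)"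
      by (rule l2_dom(2)[OF gl]) (use dout dle in auto)
    then have "l2_norm n (\<lambda>k. h p k - t k) \<le> sqrt ((q ^ p)\<^sup>2 * infsum (\<lambda>k. (cmod (g k))\<^sup>2) (idx n))"
      unfolding l2_norm_def by (rule real_sqrt_le_mono)
    also have "\<dots> = q ^ p * l2_norm n g" using q0 by (simp add: l2_norm_def real_sqrt_mult)
    finally show ?thesis .
  qed
  have "t \<in> V"
  proof (rule cs_closed[OF CS tl2])
    fix e :: real assume e: "0 < e"
    show "\<exists>f\<in>V. l2_norm n (\<lambda>k. f k - t k) < e"
    proof (cases "l2_norm n g \<le> 0")
      case True
      have "l2_norm n (\<lambda>k. h 0 k - t k) < e" using nle[of 0] True e by simp
      then show ?thesis using hV by blast
    next
      case False
      then have N: "0 < l2_norm n g" by simp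
      obtain p where p: "q ^ p < e / l2_norm n g" using real_arch_pow_inv[of "e / l2_norm n g" q] e N q1 by auto
      then have "q ^ p * l2_norm n g < e" using N by (simp add: pos_less_divide_eq)
      then have "l2_norm n (\<lambda>k. h p k - t k) < e" using nle[of p] by simp
      then show ?thesis using hV by blast
    qed
  qed
  then have "(\<lambda>k. inverse (g ?z) * t k) \<in> V" by (rule cs_scal[OF CS])
  moreover have "(\<lambda>k. inverse (g ?z) * t k) = ket ?z" using g0 by (simp add: t_def fun_eq_iff)
  ultimately show ?thesis by simp
qed

lemma step3:
  assumes CS: "closed_subspace n V"
    and Inv: "\<forall>i\<in>{1..n+1}. \<forall>f\<in>V. Tm q n lam i f \<in> V \<and> Sm q n lam i f \<in> V"
    and z: "ket (\<lambda>_. 0) \<in> V"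
  shows "k \<in> idx n \<Longrightarrow> ket k \<in> V"
proof (induction "\<Sum>i = 1..n. k i" arbitrary: k rule: less_induct)
  case less
  show ?case
  proof (cases "k = (\<lambda>_. 0)")
    case True
    then show ?thesis using z by simp
  next
    case False
    obtain j where j: "j \<in> {1..n}" "0 < k j" using idx_nonzero[OF less.prems False] .
    let ?k' = "k(j := k j - 1)"
    have I: "?k' \<in> idx n" using idx_dn[OF less.prems] by simp
    have e: "?k'(j := Suc (?k' j)) = k" using j by auto
    have K: "ket ?k' \<in> V" using less.hyps[OF sum_dn_less[where k=k and j=j and n=n, OF j] I] .
    have SV: "Sm q n lam j (ket ?k') \<in> V" using Inv K j by auto
    have "Sm q n lam j (ket ?k') = (\<lambda>m. complex_of_real (wt q n j ?k') * ket k m)"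
      using j rais_ket[OF I j(1), of "wt q n j"] unfolding e by (simp add: Sm_def)
    moreover have "wt q n j ?k' \<noteq> 0" using wt_bounds(1)[OF q0 q1] by (metis less_irrefl)
    ultimately have "(\<lambda>m. inverse (complex_of_real (wt q n j ?k')) * Sm q n lam j (ket ?k') m) = ket k"
      by (simp add: fun_eq_iff)
    moreover have "(\<lambda>m. inverse (complex_of_real (wt q n j ?k')) * Sm q n lam j (ket ?k') m) \<in> V"
      by (rule cs_scal[OF CS SV])
    ultimately show ?thesis by simp
  qed
qed

end

lemma trunc_in:
  assumes CS: "closed_subspace n V" and K: "\<forall>k\<in>idx n. ket k \<in> V"
  shows "finite F \<Longrightarrow> F \<subseteq> idx n \<Longrightarrow> (\<lambda>k. if k \<in> F then g k else 0) \<in> V"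
proof (induction F rule: finite_induct)
  case empty
  then show ?case using CS by (simp add: closed_subspace_def zero_vec_def)
next
  case (insert x F)
  have a: "(\<lambda>k. if k \<in> F then g k else 0) \<in> V" using insert by auto
  have b: "ket x \<in> V" using K insert by auto
  have "(\<lambda>k. 1 * (if k \<in> F then g k else 0) + g x * ket x k) \<in> V" by (rule cs_lin[OF CS a b])
  moreover have "(\<lambda>k. 1 * (if k \<in> F then g k else 0) + g x * ket x k) = (\<lambda>k. if k \<in> insert x F then g k else 0)"
    using insert(2) by (intro ext) (auto simp: ket_def)
  ultimately show ?case by simp
qed

lemma approx_in:
  assumes CS: "closed_subspace n V" and K: "\<forall>k\<in>idx n. ket k \<in> V" and gl: "g \<in> l2 n"
  shows "g \<in> V"
proof (rule cs_closed[OF CS gl])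
  fix e :: real assume e: "0 < e"
  let ?G = "\<lambda>k. (cmod (g k))\<^sup>2"
  have sG: "?G summable_on idx n" by (rule l2_summ[OF gl])
  obtain F where F: "finite F" "F \<subseteq> idx n" "dist (sum ?G F) (infsum ?G (idx n)) \<le> e\<^sup>2 / 2"
    using infsum_finite_approximation[OF sG, of "e\<^sup>2 / 2"] e by auto
  define h where "h = (\<lambda>k. if k \<in> F then g k else 0)"
  have hV: "h \<in> V" unfolding h_def by (rule trunc_in[OF CS K F(1) F(2)])
  have "infsum (\<lambda>k. (cmod (h k - g k))\<^sup>2) (idx n) = infsum ?G (idx n - F)"
    by (rule infsum_cong_neutral) (auto simp: h_def)
  also have "\<dots> = infsum ?G (idx n) - infsum ?G F"
    by (rule infsum_Diff[OF sG _ F(2)]) (simp add: F(1))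
  also have "\<dots> = infsum ?G (idx n) - sum ?G F" using F(1) by simp
  also have "\<dots> < e\<^sup>2"
  proof -
    have d: "\<bar>sum ?G F - infsum ?G (idx n)\<bar> \<le> e\<^sup>2 / 2" using F(3) by (simp add: dist_real_def)
    have "0 < e\<^sup>2" using e by simp
    have a: "infsum ?G (idx n) - sum ?G F \<le> \<bar>sum ?G F - infsum ?G (idx n)\<bar>"
      by (metis abs_ge_self abs_minus_commute)
    show ?thesis using a d \<open>0 < e\<^sup>2\<close> by linarith
  qed
  finally have "infsum (\<lambda>k. (cmod (h k - g k))\<^sup>2) (idx n) < e\<^sup>2" .
  then have "l2_norm n (\<lambda>k. h k - g k) < sqrt (e\<^sup>2)" unfolding l2_norm_def by (rule real_sqrt_less_mono)
  then have "l2_norm n (\<lambda>k. h k - g k) < e" using e by simp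
  then show "\<exists>f\<in>V. l2_norm n (\<lambda>k. f k - g k) < e" using hV by blast
qed

lemma irred:
  assumes q0: "0 < q" and q1: "q < 1" and n1: "1 \<le> n" and lam1: "cmod lam = 1"
    and CS: "closed_subspace n V"
    and Inv: "\<forall>i\<in>{1..n+1}. \<forall>f\<in>V. Tm q n lam i f \<in> V \<and> Sm q n lam i f \<in> V"
  shows "V = {zero_vec} \<or> V = l2 n"
proof (cases "\<exists>f\<in>V. f \<noteq> zero_vec")
  case False
  then have "V = {zero_vec}" using CS by (auto simp: closed_subspace_def)
  then show ?thesis by simp
next
  case True
  then obtain f where f: "f \<in> V" "f \<noteq> zero_vec" by blast
  then obtain k where k: "f k \<noteq> 0" by (auto simp: zero_vec_def fun_eq_iff)
  have fl: "f \<in> l2 n" using cs_sub[OF CS] f by auto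
  have ki: "k \<in> idx n" using l2_out[OF fl] k by blast
  obtain g where g: "g \<in> V" "g (\<lambda>_. 0) \<noteq> 0" using step1[OF q0 q1 n1 lam1 CS Inv f(1) ki k] by blast
  have z: "ket (\<lambda>_. 0) \<in> V" by (rule step2[OF q0 q1 n1 lam1 CS Inv g])
  have K: "\<forall>k\<in>idx n. ket k \<in> V" using step3[OF q0 q1 n1 lam1 CS Inv z] by blast
  have "l2 n \<subseteq> V" using approx_in[OF CS K] by blast
  then show ?thesis using cs_sub[OF CS] by blast
qed

lemma scal_ket_minus_cong: "(0 < k i \<Longrightarrow> c = c') \<Longrightarrow> scal c (ket_minus k i) = scal c' (ket_minus k i)"
  by (cases "k i = 0") (auto simp: ket_minus_def scal_def zero_vec_def)

theorem proposition1p2: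
  fixes q :: real and n :: nat and lam :: complex
  assumes "0 < q" and "q < 1" and "n \<ge> 1" and "cmod lam = 1"
  shows "\<exists>T S :: nat \<Rightarrow> op.
    (\<forall>i\<in>{1..n+1}. bounded_op n (T i) \<and> bounded_op n (S i) \<and> is_adjoint n (T i) (S i)) \<and>
    (\<forall>i\<in>{1..n-1}. \<forall>k\<in>idx n. T i (ket k) =
        scal (complex_of_real (q ^ (\<Sum>j = 1..i - 1. k j) * sqrt (1 - q ^ (2 * k i)))) (ket_minus k i)) \<and>
    (\<forall>k\<in>idx n. T n (ket k) =
        scal (complex_of_real (q ^ (\<Sum>j = 1..n - 1. k j) * sqrt (1 - q ^ (4 * k n)))) (ket_minus k n)) \<and>
    (\<forall>k\<in>idx n. T (n + 1) (ket k) =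
        scal (lam * complex_of_real (q ^ ((\<Sum>j = 1..n. k j) + k n))) (ket k)) \<and>
    sphere_relations n q (Xop n T) T (Xop n S) S \<and>
    (\<forall>V. closed_subspace n V \<and>
         (\<forall>i\<in>{1..n+1}. \<forall>f\<in>V. T i f \<in> V \<and> S i f \<in> V)
         \<longrightarrow> V = {zero_vec} \<or> V = l2 n)"
proof (intro exI conjI)
  note q0 = assms(1) and q1 = assms(2) and n1 = assms(3) and lam1 = assms(4)
  let ?T = "Tm q n lam" and ?S = "Sm q n lam"
  have wb: "\<bar>wt q n i k\<bar> \<le> 1" for i k using wt_bounds[OF q0 q1, of n i k] by simp
  have db: "cmod (dd q n lam k) \<le> 1" for k using cmod_dd[OF lam1 q0 q1] by simp
  show "\<forall>i\<in>{1..n+1}. bounded_op n (?T i) \<and> bounded_op n (?S i) \<and> is_adjoint n (?T i) (?S i)"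
  proof
    fix i assume i: "i \<in> {1..n+1}"
    show "bounded_op n (?T i) \<and> bounded_op n (?S i) \<and> is_adjoint n (?T i) (?S i)"
    proof (cases "i \<le> n")
      case True
      then have i': "i \<in> {1..n}" using i by simp
      show ?thesis using True bounded_low[OF i' wb] bounded_rais[OF i' wb] adj_low[OF i']
        by (simp add: Tm_def Sm_def)
    next
      case False
      show ?thesis using False bounded_diag[OF db] bounded_diag[of "\<lambda>k. cnj (dd q n lam k)"] db adj_diag
        by (simp add: Tm_def Sm_def)
    qed
  qed
  show "\<forall>i\<in>{1..n-1}. \<forall>k\<in>idx n. ?T i (ket k) =
        scal (complex_of_real (q ^ (\<Sum>j = 1..i - 1. k j) * sqrt (1 - q ^ (2 * k i)))) (ket_minus k i)"
  proof (intro ballI)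
    fix i k assume i: "i \<in> {1..n-1}" and k: "k \<in> idx n"
    have "?T i (ket k) = scal (complex_of_real (wt q n i (k(i := k i - 1)))) (ket_minus k i)"
    proof -
      have "i \<le> n" using i by auto
      then show ?thesis by (simp add: Tm_def ket_low[OF k])
    qed
    also have "\<dots> = scal (complex_of_real (q ^ (\<Sum>j = 1..i - 1. k j) * sqrt (1 - q ^ (2 * k i)))) (ket_minus k i)"
    proof (rule scal_ket_minus_cong)
      assume p: "0 < k i"
      have "i \<noteq> n" using i by auto
      then show "complex_of_real (wt q n i (k(i := k i - 1))) = complex_of_real (q ^ (\<Sum>j = 1..i - 1. k j) * sqrt (1 - q ^ (2 * k i)))"
        using wt_dn[of k i q n, OF p] by simp
    qed
    finally show "?T i (ket k) = scal (complex_of_real (q ^ (\<Sum>j = 1..i - 1. k j) * sqrt (1 - q ^ (2 * k i)))) (ket_minus k i)" .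
  qed
  show "\<forall>k\<in>idx n. ?T n (ket k) =
        scal (complex_of_real (q ^ (\<Sum>j = 1..n - 1. k j) * sqrt (1 - q ^ (4 * k n)))) (ket_minus k n)"
  proof
    fix k assume k: "k \<in> idx n"
    have "?T n (ket k) = scal (complex_of_real (wt q n n (k(n := k n - 1)))) (ket_minus k n)"
      by (simp add: Tm_def ket_low[OF k])
    also have "\<dots> = scal (complex_of_real (q ^ (\<Sum>j = 1..n - 1. k j) * sqrt (1 - q ^ (4 * k n)))) (ket_minus k n)"
    proof (rule scal_ket_minus_cong)
      assume p: "0 < k n"
      show "complex_of_real (wt q n n (k(n := k n - 1))) = complex_of_real (q ^ (\<Sum>j = 1..n - 1. k j) * sqrt (1 - q ^ (4 * k n)))"
        using wt_dn[of k n q n, OF p] by simp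
    qed
    finally show "?T n (ket k) = scal (complex_of_real (q ^ (\<Sum>j = 1..n - 1. k j) * sqrt (1 - q ^ (4 * k n)))) (ket_minus k n)" .
  qed
  show "\<forall>k\<in>idx n. ?T (n + 1) (ket k) = scal (lam * complex_of_real (q ^ ((\<Sum>j = 1..n. k j) + k n))) (ket k)"
  proof
    fix k assume k: "k \<in> idx n"
    show "?T (n + 1) (ket k) = scal (lam * complex_of_real (q ^ ((\<Sum>j = 1..n. k j) + k n))) (ket k)"
      using k by (intro ext) (auto simp: Tm_def diag_def scal_def ket_def dd_def)
  qed
  show "sphere_relations n q (Xop n ?T) ?T (Xop n ?S) ?S"
    unfolding sphere_relations_def Let_def
  proof (intro ballI allI conjI impI)
    fix f m assume f: "f \<in> l2 n"
    note R = R1[OF q0 q1 n1 lam1] R2[OF q0 q1 n1 lam1] R3[OF q0 q1 n1 lam1] R4[OF q0 q1 n1 lam1]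
      R5[OF q0 q1 n1 lam1] R6[OF q0 q1 n1 lam1] R7[OF q0 q1 n1 lam1] R8[OF q0 q1 n1 lam1]
      R9[OF q0 q1 n1 lam1] R10[OF q0 q1 n1 lam1] R11[OF q0 q1 n1 lam1]
    show "\<And>i j. i \<in> {1..n} \<Longrightarrow> j \<in> {1..n} \<Longrightarrow> i < j \<Longrightarrow> Xop n ?T i (Xop n ?T j f) m = inverse (complex_of_real q) * Xop n ?T j (Xop n ?T i f) m"
      by (rule R1[OF q0 q1 n1 lam1])
    show "\<And>i j. i \<in> {1..n} \<Longrightarrow> j \<in> {1..n} \<Longrightarrow> j < i \<Longrightarrow> ?T i (?T j f) m = inverse (complex_of_real q) * ?T j (?T i f) m"
      by (rule R2[OF q0 q1 n1 lam1])
    show "\<And>i j. i \<in> {1..n} \<Longrightarrow> j \<in> {1..n} \<Longrightarrow> i \<noteq> j \<Longrightarrow> Xop n ?T i (?T j f) m = inverse (complex_of_real q) * ?T j (Xop n ?T i f) m"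
      by (rule R3[OF q0 q1 n1 lam1])
    show "(\<Sum>i = 1..n. Xop n ?S i (Xop n ?T i f) m + ?S i (?T i f) m) = f m"
      by (rule R12[OF q0 q1 n1 lam1 f])
  qed (rule R4[OF q0 q1 n1 lam1] R5[OF q0 q1 n1 lam1] R6[OF q0 q1 n1 lam1] R7[OF q0 q1 n1 lam1]
      R8[OF q0 q1 n1 lam1] R9[OF q0 q1 n1 lam1] R10[OF q0 q1 n1 lam1] R11[OF q0 q1 n1 lam1]; assumption)+
  show "\<forall>V. closed_subspace n V \<and> (\<forall>i\<in>{1..n+1}. \<forall>f\<in>V. ?T i f \<in> V \<and> ?S i f \<in> V) \<longrightarrow> V = {zero_vec} \<or> V = l2 n"
    using irred[OF q0 q1 n1 lam1] by blast
qed

end
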